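(* Let $f:\mathbb{R}^d\to\mathbb{R}$ be bounded below with $f^* := \inf_{x} f(x)$, and let $n\ge 1$ clients be indexed by $[n]=\{1,\dots,n\}$. Let ${\cal G}\subseteq[n]$ be a nonempty set with $G:=|{\cal G}|$ (the clients whose data distribution coincides with that of the target client). Consider the following process (\textsc{MeritFed}) with stepsize $\gamma>0$ and starting point $x^0\in\mathbb{R}^d$: at each iteration $t=0,1,\dots$, every client $i\in[n]$ sends a vector $g_i^t\in\mathbb{R}^d$ to the server, then the server chooses a (possibly random) weight vector $w^{t+1}\in\Delta_1^n$ and sets $$x^{t+1}=x^t-\gamma\sum_{i=1}^n w_i^{t+1} g_i^t .$$ Assume: 1. (Bounded variance) For every $t$ and every $i\in{\cal G}$, $g_i^t=g_i(x^t,\boldsymbol{\xi}_i^t)$ is a stochastic gradient computed from a fresh sample, satisfying $\mathbb{E}[g_i^t\mid x^t]=\nabla f(x^t)$ and $\mathbb{E}[\|g_i^t-\nabla f(x^t)\|^2\mid x^t]\le\sigma^2$ for some $\sigma\ge 0$, and the noises $g_i^t-\nabla f(x^t)$, $i\in{\cal G}$, are mutually independent conditionally on $x^t$. The vectors $g_i^t$ for $i\notin{\cal G}$ are arbitrary (no assumption is made on them). 2. (Smoothness) $f$ is $L$-smooth: $f(x)\le f(y)+\langle\nabla f(y),x-y\rangle+\frac{L}{2}\|x-y\|^2$ for all $x,y\in\mathbb{R}^d$. 3. (Inexact weight selection) For some $\delta\ge 0$ and every $t$, $$\mathbb{E}\big[f(x^{t+1})\mid x^t,\{g_i^t\}_{i=1}^n\big]-\min_{w\in\Delta_1^n}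 f\Big(x^t-\gamma\sum_{i=1}^n w_i g_i^t\Big)\le\delta .$$ If $\gamma\le\frac{1}{2L}$, then for every $T\ge1$, $$\frac1T\sum_{t=0}^{T-1}\mathbb{E}\|\nabla f(x^t)\|^2\le\frac{2(f(x^0)-f^* )}{T\gamma}+\frac{2\sigma^2\gamma L}{G}+\frac{2\delta}{\gamma}.$$ If, in addition, $f$ satisfies the Polyak–Łojasiewicz condition with parameter $\mu>0$, i.e. $f^*\ge f(x)-\frac{1}{2\mu}\|\nabla f(x)\|^2$ for all $x\in\mathbb{R}^d$, then for every $T\ge 1$, $$\mathbb{E}f(x^T)-f^*\le(1-\gamma\mu)^T\big(f(x^0)-f^*\big)+\frac{\sigma^2\gamma L}{\mu G}+\frac{\delta}{\gamma\mu}.$$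
   Context: $\Delta_1^n=\{w\in\mathbb{R}^n:\sum_{i=1}^n w_i=1,\ w_i\ge0\ \forall i\}$ denotes the unit simplex. $\|\cdot\|$ is the Euclidean norm. The target problem is $\min_x f(x)$ where $f(x)=\mathbb{E}_{\xi\sim{\cal D}_1}[f_\xi(x)]$ is the expected loss of the target client; clients in ${\cal G}$ have the same data distribution ${\cal D}_1$, so their stochastic gradients are unbiased for $\nabla f$. Expectations $\mathbb{E}$ are over all randomness of the process. *)

theory Defs
  imports "HOL-Probability.Probability"
begin

definition simplex1 :: "nat \<Rightarrow> (nat \<Rightarrow> real) set" where
  "simplex1 n = {w. (\<forall>i\<in>{1..n}. 0 \<le> w i) \<and> (\<Sum>i\<in>{1..n}. w i) = 1}"

definition gen_sigma :: "'a measure \<Rightarrow> ('a \<Rightarrow> 'b::topological_space) set \<Rightarrow> 'a measure" where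
  "gen_sigma M Xs = sigma (space M) (\<Union>X\<in>Xs. {X -` A \<inter> space M | A. A \<in> sets borel})"

definition cond_indep_vars ::
  "'a measure \<Rightarrow> 'a measure \<Rightarrow> ('i \<Rightarrow> 'a \<Rightarrow> 'b::topological_space) \<Rightarrow> 'i set \<Rightarrow> bool" where
  "cond_indep_vars M F X I \<longleftrightarrow>
     (\<forall>J A. J \<subseteq> I \<longrightarrow> finite J \<longrightarrow> J \<noteq> {} \<longrightarrow>
        (\<forall>j\<in>J. A j \<in> sets (gen_sigma M {X j})) \<longrightarrow>
        (AE \<omega> in M. real_cond_exp M F (indicator (\<Inter>j\<in>J. A j)) \<omega>
                     = (\<Prod>j\<in>J. real_cond_exp M F (indicator (A j)) \<omega>)))"

end

theory Submission imports Defs begin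

lemma gen_sigma_gen_sub:
  "(\<Union>X\<in>Xs. {X -` A \<inter> space M | A. A \<in> sets borel}) \<subseteq> Pow (space M)"
  by auto

lemma space_gen_sigma [simp]: "space (gen_sigma M Xs) = space M"
  unfolding gen_sigma_def by (rule space_measure_of) (rule gen_sigma_gen_sub)

lemma sets_gen_sigma: "sets (gen_sigma M Xs) = sigma_sets (space M) (\<Union>X\<in>Xs. {X -` A \<inter> space M | A. A \<in> sets borel})"
  unfolding gen_sigma_def by (rule sets_measure_of) (rule gen_sigma_gen_sub)

lemma gen_sigma_meas:
  assumes "X \<in> Xs" shows "X \<in> borel_measurable (gen_sigma M Xs)"
proof (rule measurableI)
  fix A :: "'b set" assume "A \<in> sets borel"
  then show "X -` A \<inter> space (gen_sigma M Xs) \<in> sets (gen_sigma M Xs)"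
    unfolding sets_gen_sigma space_gen_sigma using assms by (intro sigma_sets.Basic) blast
qed auto

lemma gen_sigma_subset:
  assumes "\<And>X. X \<in> Xs \<Longrightarrow> X \<in> borel_measurable M"
  shows "sets (gen_sigma M Xs) \<subseteq> sets M"
  unfolding sets_gen_sigma
proof (rule sigma_algebra.sigma_sets_subset[OF sets.sigma_algebra_axioms])
  show "(\<Union>X\<in>Xs. {X -` A \<inter> space M | A. A \<in> sets borel}) \<subseteq> sets M"
    using assms measurable_sets by blast
qed

lemma gen_sigma_subalg:
  assumes "prob_space M" "\<And>X. X \<in> Xs \<Longrightarrow> X \<in> borel_measurable M"
  shows "sigma_finite_subalgebra M (gen_sigma M Xs)"
proof -
  interpret prob_space M by fact
  have "finite_measure_subalgebra M (gen_sigma M Xs)"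
    by unfold_locales (use gen_sigma_subset[OF assms(2)] in \<open>auto simp: subalgebra_def\<close>)
  then show ?thesis by (rule finite_measure_subalgebra_is_sigma_finite)
qed


lemma gradf_component_lim:
  fixes f :: "'v::euclidean_space \<Rightarrow> real"
  assumes "GDERIV f y :> D"
  shows "(\<lambda>k::nat. (f (y + (1 / real (Suc k)) *\<^sub>R b) - f y) * real (Suc k)) \<longlonglongrightarrow> inner D b"
proof -
  have d: "((\<lambda>t. f (y + t *\<^sub>R b)) has_real_derivative inner b D) (at 0)"
  proof -
    have "((\<lambda>t. y + t *\<^sub>R b) has_derivative (\<lambda>t. t *\<^sub>R b)) (at (0::real))"
      by (auto intro!: derivative_eq_intros)
    from has_derivative_compose[OF this, of f "\<lambda>h. inner h D"] assms
    have "((\<lambda>t. f (y + t *\<^sub>R b)) has_derivative (\<lambda>t. inner (t *\<^sub>R b) D)) (at 0)"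
      by (simp add: gderiv_def)
    then show ?thesis by (simp add: has_field_derivative_def mult.commute[of _ "b \<bullet> D"])
  qed
  then have "((\<lambda>h. (f (y + h *\<^sub>R b) - f y) / h) \<longlongrightarrow> inner b D) (at 0)"
    using DERIV_def[of "\<lambda>t. f (y + t *\<^sub>R b)"] by simp
  moreover have "filterlim (\<lambda>k::nat. 1 / real (Suc k)) (at 0) sequentially"
    by (rule filterlim_atI) (auto intro: LIMSEQ_Suc[OF lim_const_over_n] simp del: of_nat_Suc)
  ultimately have "(\<lambda>k::nat. (f (y + (1 / real (Suc k)) *\<^sub>R b) - f y) / (1 / real (Suc k))) \<longlonglongrightarrow> inner b D"
    by (rule filterlim_compose)
  then show ?thesis by (simp add: inner_commute)
qed

lemma gradf_measurable:
  fixes f :: "'v::euclidean_space \<Rightarrow> real"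
  assumes grad: "\<And>y. GDERIV f y :> gradf y"
  shows "gradf \<in> borel_measurable borel"
proof -
  have cont: "continuous_on UNIV f"
    using grad by (metis differentiable_imp_continuous_on differentiable_def differentiable_on_def gderiv_def)
  then have fm: "f \<in> borel_measurable borel" by (rule borel_measurable_continuous_onI)
  have comp: "(\<lambda>y. inner (gradf y) b) \<in> borel_measurable borel" for b
  proof (rule borel_measurable_LIMSEQ_real)
    show "(\<lambda>k::nat. (f (y + (1 / real (Suc k)) *\<^sub>R b) - f y) * real (Suc k)) \<longlonglongrightarrow> inner (gradf y) b" for y
      by (rule gradf_component_lim[OF grad])
    show "(\<lambda>y. (f (y + (1 / real (Suc k)) *\<^sub>R b) - f y) * real (Suc k)) \<in> borel_measurable borel" for k
      using fm by measurable
  qed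
  have "gradf = (\<lambda>y. \<Sum>b\<in>Basis. inner (gradf y) b *\<^sub>R b)"
    by (simp add: euclidean_representation)
  also have "\<dots> \<in> borel_measurable borel"
    using comp by (intro borel_measurable_sum borel_measurable_scaleR) auto
  finally show ?thesis .
qed


lemma int_bound_mult:
  fixes f g :: "'a \<Rightarrow> real"
  assumes "integrable M f" "g \<in> borel_measurable M" "AE x in M. \<bar>g x\<bar> \<le> 1"
  shows "integrable M (\<lambda>x. f x * g x)" "integrable M (\<lambda>x. g x * f x)"
proof -
  have [measurable]: "f \<in> borel_measurable M" using assms(1) by auto
  have *: "AE x in M. norm (f x * g x) \<le> norm (f x)"
    using assms(3) by eventually_elim (auto simp: abs_mult mult_left_le)
  show "integrable M (\<lambda>x. f x * g x)"
    by (rule Bochner_Integration.integrable_bound[OF assms(1) _ *]) (use assms(2) in simp)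
  then show "integrable M (\<lambda>x. g x * f x)" by (simp add: mult.commute)
qed

lemma cross_zero:
  fixes X Y :: "'a \<Rightarrow> real"
  assumes M: "prob_space M"
    and F: "sigma_finite_subalgebra M F"
    and Fi: "sigma_finite_subalgebra M Fi" and Fj: "sigma_finite_subalgebra M Fj"
    and indep: "\<And>A B. A \<in> sets Fi \<Longrightarrow> B \<in> sets Fj \<Longrightarrow>
        AE \<omega> in M. real_cond_exp M F (indicator (A \<inter> B)) \<omega>
           = real_cond_exp M F (indicator A) \<omega> * real_cond_exp M F (indicator B) \<omega>"
    and Xm: "X \<in> borel_measurable Fi" and Ym: "Y \<in> borel_measurable Fj"
    and Yi: "integrable M Y" and XYi: "integrable M (\<lambda>\<omega>. X \<omega> * Y \<omega>)"
    and Y0: "AE \<omega> in M. real_cond_exp M F Y \<omega> = 0"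
  shows "(\<integral>\<omega>. X \<omega> * Y \<omega> \<partial>M) = 0"
proof -
  interpret prob_space M by fact
  interpret F: sigma_finite_subalgebra M F by fact
  interpret Fi: sigma_finite_subalgebra M Fi by fact
  interpret Fj: sigma_finite_subalgebra M Fj by fact
  have subF: "sets F \<subseteq> sets M" using F.subalg by (simp add: subalgebra_def)
  have subFi: "sets Fi \<subseteq> sets M" using Fi.subalg by (simp add: subalgebra_def)
  have subFj: "sets Fj \<subseteq> sets M" using Fj.subalg by (simp add: subalgebra_def)
  have Ymeas[measurable]: "Y \<in> borel_measurable M"
    using Ym Fj.subalg measurable_from_subalg by blast
  have Xmeas[measurable]: "X \<in> borel_measurable M"
    using Xm Fi.subalg measurable_from_subalg by blast
  have indint: "integrable M (indicator A :: 'a \<Rightarrow> real)" if "A \<in> sets M" for A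
    using that by (intro integrable_real_indicator) (auto simp: less_top[symmetric])
  have key: "(\<integral>\<omega>. indicator A \<omega> * Y \<omega> \<partial>M) = 0" if A: "A \<in> sets Fi" for A
  proof -
    have AM[measurable]: "A \<in> sets M" using A subFi by blast
    define p where "p = real_cond_exp M F (indicator A)"
    have pF[measurable]: "p \<in> borel_measurable F" unfolding p_def by simp
    have pM[measurable]: "p \<in> borel_measurable M" unfolding p_def by simp
    have p0: "AE \<omega> in M. 0 \<le> p \<omega>" unfolding p_def
      by (rule F.real_cond_exp_ge_c) (auto intro: indint)
    have p1: "AE \<omega> in M. p \<omega> \<le> 1" unfolding p_def
      by (rule F.real_cond_exp_le_c) (auto intro: indint simp: indicator_def)
    have pint: "integrable M p" unfolding p_def using indint[OF AM] by (rule F.real_cond_exp_int)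
    have bnd: "AE \<omega> in M. \<bar>indicator A \<omega> - p \<omega>\<bar> \<le> 1"
      using p0 p1 by eventually_elim (auto simp: indicator_def)
    have s1: "(\<integral>\<omega>\<in>B. (indicator A \<omega> - p \<omega>) \<partial>M) = (\<integral>\<omega>\<in>B. 0 \<partial>M)" if B: "B \<in> sets Fj" for B
    proof -
      have BM[measurable]: "B \<in> sets M" using B subFj by blast
      define q where "q = real_cond_exp M F (indicator B)"
      have qM[measurable]: "q \<in> borel_measurable M" unfolding q_def by simp
      have q0: "AE \<omega> in M. 0 \<le> q \<omega>" unfolding q_def
        by (rule F.real_cond_exp_ge_c) (auto intro: indint)
      have q1: "AE \<omega> in M. q \<omega> \<le> 1" unfolding q_def
        by (rule F.real_cond_exp_le_c) (auto intro: indint simp: indicator_def)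
      have pBint: "integrable M (\<lambda>\<omega>. p \<omega> * indicator B \<omega>)"
        using integrable_mult_indicator[OF BM pint] by (simp add: mult.commute)
      have pqint: "integrable M (\<lambda>\<omega>. p \<omega> * q \<omega>)"
        by (rule int_bound_mult(1)[OF pint qM]) (use q0 q1 in \<open>eventually_elim, auto\<close>)
      have ABint: "integrable M (\<lambda>x. indicator A x * indicator B x :: real)"
        by (rule int_bound_mult(1)[OF indint[OF AM]]) (auto simp: indicator_def)
      have e1: "(\<integral>\<omega>. (indicator B \<omega> * indicator A \<omega> :: real) \<partial>M) = (\<integral>\<omega>. p \<omega> * q \<omega> \<partial>M)"
      proof -
        have "(\<integral>\<omega>. (indicator B \<omega> * indicator A \<omega> :: real) \<partial>M) = (\<integral>\<omega>. indicator (A \<inter> B) \<omega> \<partial>M)"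
          by (rule Bochner_Integration.integral_cong) (auto simp: indicator_def)
        also have "\<dots> = (\<integral>\<omega>. real_cond_exp M F (indicator (A \<inter> B)) \<omega> \<partial>M)"
          by (rule F.real_cond_exp_int(2)[symmetric]) (auto intro: indint)
        also have "\<dots> = (\<integral>\<omega>. p \<omega> * q \<omega> \<partial>M)"
          by (rule integral_cong_AE) (use indep[OF A B] in \<open>auto simp: p_def q_def\<close>)
        finally show ?thesis .
      qed
      have e2: "(\<integral>\<omega>. indicator B \<omega> * p \<omega> \<partial>M) = (\<integral>\<omega>. p \<omega> * q \<omega> \<partial>M)"
      proof -
        have "(\<integral>\<omega>. indicator B \<omega> * p \<omega> \<partial>M) = (\<integral>\<omega>. p \<omega> * indicator B \<omega> \<partial>M)"
          by (simp add: mult.commute)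
        also have "\<dots> = (\<integral>\<omega>. p \<omega> * q \<omega> \<partial>M)"
          unfolding q_def by (rule F.real_cond_exp_intg(2)[symmetric]) (use pBint in auto)
        finally show ?thesis .
      qed
      have "(\<integral>\<omega>\<in>B. (indicator A \<omega> - p \<omega>) \<partial>M)
          = (\<integral>\<omega>. (indicator B \<omega> * indicator A \<omega> :: real) - indicator B \<omega> * p \<omega> \<partial>M)"
        by (simp add: set_lebesgue_integral_def right_diff_distrib)
      also have "\<dots> = (\<integral>\<omega>. (indicator B \<omega> * indicator A \<omega> :: real) \<partial>M) - (\<integral>\<omega>. indicator B \<omega> * p \<omega> \<partial>M)"
        by (rule Bochner_Integration.integral_diff)
           (use pBint ABint in \<open>auto simp: mult.commute\<close>)
      also have "\<dots> = 0" using e1 e2 by simp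
      finally show ?thesis by simp
    qed
    have dint: "integrable M (\<lambda>\<omega>. indicator A \<omega> - p \<omega>)" using pint indint[OF AM] by auto
    have s2: "AE \<omega> in M. real_cond_exp M Fj (\<lambda>\<omega>. indicator A \<omega> - p \<omega>) \<omega> = 0"
      by (rule Fj.real_cond_exp_charact) (use s1 dint in auto)
    have Ydint: "integrable M (\<lambda>\<omega>. Y \<omega> * (indicator A \<omega> - p \<omega>))"
      by (rule int_bound_mult(1)[OF Yi]) (use bnd in auto)
    have s3: "(\<integral>\<omega>. Y \<omega> * (indicator A \<omega> - p \<omega>) \<partial>M) = 0"
    proof -
      have "(\<integral>\<omega>. Y \<omega> * (indicator A \<omega> - p \<omega>) \<partial>M)
          = (\<integral>\<omega>. Y \<omega> * real_cond_exp M Fj (\<lambda>\<omega>. indicator A \<omega> - p \<omega>) \<omega> \<partial>M)"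
        by (rule Fj.real_cond_exp_intg(2)[symmetric]) (use Ydint Ym in auto)
      also have "\<dots> = (\<integral>\<omega>. 0 \<partial>M)"
        by (rule integral_cong_AE) (use s2 in auto)
      finally show ?thesis by simp
    qed
    have pYint: "integrable M (\<lambda>\<omega>. p \<omega> * Y \<omega>)"
      by (rule int_bound_mult(2)[OF Yi pM]) (use p0 p1 in \<open>eventually_elim, auto\<close>)
    have s4: "(\<integral>\<omega>. p \<omega> * Y \<omega> \<partial>M) = 0"
    proof -
      have "(\<integral>\<omega>. p \<omega> * Y \<omega> \<partial>M) = (\<integral>\<omega>. p \<omega> * real_cond_exp M F Y \<omega> \<partial>M)"
        by (rule F.real_cond_exp_intg(2)[symmetric]) (use pYint in auto)
      also have "\<dots> = (\<integral>\<omega>. 0 \<partial>M)"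
        by (rule integral_cong_AE) (use Y0 in auto)
      finally show ?thesis by simp
    qed
    have "(\<integral>\<omega>. indicator A \<omega> * Y \<omega> \<partial>M) = (\<integral>\<omega>. Y \<omega> * (indicator A \<omega> - p \<omega>) + p \<omega> * Y \<omega> \<partial>M)"
      by (rule Bochner_Integration.integral_cong) (auto simp: algebra_simps)
    also have "\<dots> = 0"
      using s3 s4 Ydint pYint by simp
    finally show ?thesis .
  qed
  have s5: "AE \<omega> in M. real_cond_exp M Fi Y \<omega> = 0"
  proof (rule Fi.real_cond_exp_charact)
    fix A assume "A \<in> sets Fi"
    then show "(\<integral>\<omega>\<in>A. Y \<omega> \<partial>M) = (\<integral>\<omega>\<in>A. 0 \<partial>M)"
      using key by (simp add: set_lebesgue_integral_def)
  qed (use Yi in auto)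
  have "(\<integral>\<omega>. X \<omega> * Y \<omega> \<partial>M) = (\<integral>\<omega>. X \<omega> * real_cond_exp M Fi Y \<omega> \<partial>M)"
    by (rule Fi.real_cond_exp_intg(2)[symmetric]) (use XYi Xm in auto)
  also have "\<dots> = (\<integral>\<omega>. 0 \<partial>M)"
    by (rule integral_cong_AE) (use s5 in auto)
  finally show ?thesis by simp
qed


lemma grad_bound:
  fixes f :: "'v::real_inner \<Rightarrow> real"
  assumes below: "bdd_below (range f)" and L: "0 < L"
    and smooth: "\<And>u y. f u \<le> f y + inner (gradf y) (u - y) + L / 2 * (norm (u - y))^2"
  shows "(norm (gradf y))^2 \<le> 2 * L * (f y - (INF u. f u))"
proof -
  define u where "u = y - (1 / L) *\<^sub>R gradf y"
  have "(INF u. f u) \<le> f u" using below by (simp add: cInf_lower)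
  also have "f u \<le> f y + inner (gradf y) (u - y) + L / 2 * (norm (u - y))^2" by (rule smooth)
  also have "\<dots> = f y - (norm (gradf y))^2 / (2 * L)"
  proof -
    have 1: "inner (gradf y) (u - y) = -((norm (gradf y))^2 / L)" by (simp add: u_def dot_square_norm)
    have 2: "(norm (u - y))^2 = (norm (gradf y))^2 / L^2" using L by (simp add: u_def power_divide)
    show ?thesis unfolding 1 2 using L by (simp add: field_simps power2_eq_square)
  qed
  finally show ?thesis using L by (simp add: field_simps)
qed

lemma sqint:
  fixes u v :: "'a \<Rightarrow> 'v::euclidean_space"
  assumes [measurable]: "u \<in> borel_measurable M" "v \<in> borel_measurable M"
    and iu: "integrable M (\<lambda>\<omega>. (norm (u \<omega>))^2)" and iv: "integrable M (\<lambda>\<omega>. (norm (v \<omega>))^2)"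
  shows "integrable M (\<lambda>\<omega>. inner (u \<omega>) (v \<omega>))"
    and "b \<in> Basis \<Longrightarrow> c \<in> Basis \<Longrightarrow> integrable M (\<lambda>\<omega>. inner (u \<omega>) b * inner (v \<omega>) c)"
proof -
  have ab: "a * b' \<le> (a^2 + b'^2)" if "0 \<le> a" "0 \<le> b'" for a b' :: real
  proof -
    have "0 \<le> (a - b')^2" by simp
    then have "2 * (a * b') \<le> a^2 + b'^2" by (simp add: power2_diff)
    moreover have "0 \<le> a * b'" using that by simp
    ultimately show ?thesis by linarith
  qed
  have I: "integrable M (\<lambda>\<omega>. (norm (u \<omega>))^2 + (norm (v \<omega>))^2)" using iu iv by simp
  show "integrable M (\<lambda>\<omega>. inner (u \<omega>) (v \<omega>))"
  proof (rule Bochner_Integration.integrable_bound[OF I])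
    show "AE \<omega> in M. norm (inner (u \<omega>) (v \<omega>)) \<le> norm ((norm (u \<omega>))^2 + (norm (v \<omega>))^2)"
    proof (intro AE_I2)
      fix \<omega>
      have "norm (inner (u \<omega>) (v \<omega>)) \<le> norm (u \<omega>) * norm (v \<omega>)" by (simp add: Cauchy_Schwarz_ineq2)
      also have "\<dots> \<le> (norm (u \<omega>))^2 + (norm (v \<omega>))^2" by (rule ab) auto
      finally show "norm (inner (u \<omega>) (v \<omega>)) \<le> norm ((norm (u \<omega>))^2 + (norm (v \<omega>))^2)" by simp
    qed
  qed measurable
  assume b: "b \<in> Basis" and c: "c \<in> Basis"
  show "integrable M (\<lambda>\<omega>. inner (u \<omega>) b * inner (v \<omega>) c)"
  proof (rule Bochner_Integration.integrable_bound[OF I])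
    show "AE \<omega> in M. norm (inner (u \<omega>) b * inner (v \<omega>) c) \<le> norm ((norm (u \<omega>))^2 + (norm (v \<omega>))^2)"
    proof (intro AE_I2)
      fix \<omega>
      have "norm (inner (u \<omega>) b * inner (v \<omega>) c) = \<bar>inner (u \<omega>) b\<bar> * \<bar>inner (v \<omega>) c\<bar>" by (simp add: abs_mult)
      also have "\<dots> \<le> norm (u \<omega>) * norm (v \<omega>)"
        by (intro mult_mono Basis_le_norm b c) auto
      also have "\<dots> \<le> (norm (u \<omega>))^2 + (norm (v \<omega>))^2" by (rule ab) auto
      finally show "norm (inner (u \<omega>) b * inner (v \<omega>) c) \<le> norm ((norm (u \<omega>))^2 + (norm (v \<omega>))^2)" by simp
    qed
  qed measurable
qed

lemma sq_int_imp_int: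
  fixes u :: "'a \<Rightarrow> 'v::euclidean_space"
  assumes "prob_space M" "u \<in> borel_measurable M" "integrable M (\<lambda>\<omega>. (norm (u \<omega>))^2)"
  shows "integrable M u"
proof -
  interpret prob_space M by fact
  have "integrable M (\<lambda>\<omega>. 1 + (norm (u \<omega>))^2)" using assms(3) by simp
  then show ?thesis
  proof (rule Bochner_Integration.integrable_bound)
    show "AE \<omega> in M. norm (u \<omega>) \<le> norm (1 + (norm (u \<omega>))^2)"
    proof (intro AE_I2)
      fix \<omega>
      have "norm (u \<omega>) \<le> 1 + (norm (u \<omega>))^2"
      proof -
        have "0 \<le> (norm (u \<omega>) - 1)^2" by simp
        then have "2 * norm (u \<omega>) \<le> (norm (u \<omega>))^2 + 1" by (simp add: power2_diff)
        then show ?thesis using norm_ge_zero[of "u \<omega>"] by linarith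
      qed
      then show "norm (u \<omega>) \<le> norm (1 + (norm (u \<omega>))^2)" by simp
    qed
  qed (rule assms(2))
qed


lemma one_step:
  fixes M :: "'a measure"
    and f :: "'v::euclidean_space \<Rightarrow> real" and gradf :: "'v \<Rightarrow> 'v"
    and n :: nat and Gs :: "nat set"
    and X X' :: "'a \<Rightarrow> 'v" and g :: "nat \<Rightarrow> 'a \<Rightarrow> 'v"
    and \<gamma> L \<sigma> \<delta> :: real
  assumes M: "prob_space M"
    and below: "bdd_below (range f)"
    and grad: "\<And>y. GDERIV f y :> gradf y"
    and Gs: "Gs \<subseteq> {1..n}" "Gs \<noteq> {}"
    and \<gamma>: "0 < \<gamma>" "L * \<gamma> \<le> 1 / 2"
    and L: "0 < L"
    and smooth: "\<And>u y. f u \<le> f y + inner (gradf y) (u - y) + L / 2 * (norm (u - y))^2"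
    and \<sigma>: "0 \<le> \<sigma>"
    and Xm: "X \<in> borel_measurable M"
    and g_meas: "\<And>i. i \<in> {1..n} \<Longrightarrow> g i \<in> borel_measurable M"
    and g_int: "\<And>i. i \<in> Gs \<Longrightarrow> integrable M (g i)"
    and fX_int: "integrable M (\<lambda>\<omega>. f (X \<omega>))"
    and fX'_int: "integrable M (\<lambda>\<omega>. f (X' \<omega>))"
    and unbiased: "\<And>i b. i \<in> Gs \<Longrightarrow> b \<in> Basis \<Longrightarrow>
           AE \<omega> in M. real_cond_exp M (gen_sigma M {X}) (\<lambda>\<omega>'. inner (g i \<omega>') b) \<omega>
                         = inner (gradf (X \<omega>)) b"
    and bounded_var: "\<And>i. i \<in> Gs \<Longrightarrow>
           AE \<omega> in M. nn_cond_exp M (gen_sigma M {X})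
                          (\<lambda>\<omega>'. ennreal ((norm (g i \<omega>' - gradf (X \<omega>')))^2)) \<omega>
                        \<le> ennreal (\<sigma>^2)"
    and noise_indep: "cond_indep_vars M (gen_sigma M {X})
           (\<lambda>i \<omega>. g i \<omega> - gradf (X \<omega>)) Gs"
    and inexact: "AE \<omega> in M.
           real_cond_exp M (gen_sigma M ({X} \<union> g ` {1..n})) (\<lambda>\<omega>'. f (X' \<omega>')) \<omega>
           - (INF v\<in>simplex1 n. f (X \<omega> - \<gamma> *\<^sub>R (\<Sum>i\<in>{1..n}. v i *\<^sub>R g i \<omega>))) \<le> \<delta>"
  shows "integrable M (\<lambda>\<omega>. (norm (gradf (X \<omega>)))^2)"
    "(\<integral>\<omega>. f (X' \<omega>) \<partial>M) \<le> (\<integral>\<omega>. f (X \<omega>) \<partial>M) - \<gamma> / 2 * (\<integral>\<omega>. (norm (gradf (X \<omega>)))^2 \<partial>M)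
        + \<delta> + L * \<gamma>^2 * \<sigma>^2 / (2 * real (card Gs))"
proof -
  interpret prob_space M by fact
  define F where "F = gen_sigma M {X}"
  define D where "D = (\<lambda>\<omega>. gradf (X \<omega>))"
  define N where "N = (\<lambda>i \<omega>. g i \<omega> - gradf (X \<omega>))"
  define G where "G = card Gs"
  define fs where "fs = (INF u. f u)"
  have finGs: "finite Gs" using Gs(1) finite_subset by blast
  have Gpos: "0 < G" using finGs Gs(2) by (simp add: G_def card_gt_0_iff)
  note Xm[measurable]
  have gradm[measurable]: "gradf \<in> borel_measurable borel" by (rule gradf_measurable[OF grad])
  have fm[measurable]: "f \<in> borel_measurable borel"
    using grad by (metis borel_measurable_continuous_onI differentiable_imp_continuous_on differentiable_def differentiable_on_def gderiv_def)
  have subF: "sigma_finite_subalgebra M F" unfolding F_def by (rule gen_sigma_subalg[OF M]) auto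
  interpret F: sigma_finite_subalgebra M F by (rule subF)
  have XF[measurable]: "X \<in> borel_measurable F" unfolding F_def by (rule gen_sigma_meas) simp
  have DM[measurable]: "D \<in> borel_measurable M" unfolding D_def by measurable
  have DF[measurable]: "D \<in> borel_measurable F" unfolding D_def by measurable
  have gm[measurable]: "g i \<in> borel_measurable M" if "i \<in> Gs" for i using g_meas that Gs(1) by blast
  have NM[measurable]: "N i \<in> borel_measurable M" if "i \<in> Gs" for i unfolding N_def using that by measurable
  have Dsq: "integrable M (\<lambda>\<omega>. (norm (D \<omega>))^2)"
  proof (rule Bochner_Integration.integrable_bound)
    show "integrable M (\<lambda>\<omega>. 2 * L * (f (X \<omega>) - fs))" using fX_int by simp
    show "AE \<omega> in M. norm ((norm (D \<omega>))^2) \<le> norm (2 * L * (f (X \<omega>) - fs))"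
    proof (intro AE_I2)
      fix \<omega>
      have "(norm (D \<omega>))^2 \<le> 2 * L * (f (X \<omega>) - fs)"
        unfolding D_def fs_def by (rule grad_bound[OF below L smooth])
      then show "norm ((norm (D \<omega>))^2) \<le> norm (2 * L * (f (X \<omega>) - fs))" by simp
    qed
  qed measurable
  then show "integrable M (\<lambda>\<omega>. (norm (gradf (X \<omega>)))^2)" by (simp add: D_def)
  have Nsq: "integrable M (\<lambda>\<omega>. (norm (N i \<omega>))^2) \<and> (\<integral>\<omega>. (norm (N i \<omega>))^2 \<partial>M) \<le> \<sigma>^2"
    if i: "i \<in> Gs" for i
  proof -
    have NMi[measurable]: "N i \<in> borel_measurable M" using NM i .
    have "(\<integral>\<^sup>+\<omega>. ennreal ((norm (N i \<omega>))^2) \<partial>M) = (\<integral>\<^sup>+\<omega>. 1 * ennreal ((norm (N i \<omega>))^2) \<partial>M)" by simp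
    also have "\<dots> = (\<integral>\<^sup>+\<omega>. 1 * nn_cond_exp M F (\<lambda>\<omega>. ennreal ((norm (N i \<omega>))^2)) \<omega> \<partial>M)"
      by (rule F.nn_cond_exp_intg[symmetric]) auto
    also have "\<dots> \<le> (\<integral>\<^sup>+\<omega>. ennreal (\<sigma>^2) \<partial>M)"
      by (rule nn_integral_mono_AE) (use bounded_var[OF i] in \<open>simp add: F_def N_def\<close>)
    also have "\<dots> = ennreal (\<sigma>^2)" by (simp add: emeasure_space_1)
    finally have le: "(\<integral>\<^sup>+\<omega>. ennreal ((norm (N i \<omega>))^2) \<partial>M) \<le> ennreal (\<sigma>^2)" .
    have int: "integrable M (\<lambda>\<omega>. (norm (N i \<omega>))^2)"
      by (rule integrableI_nonneg) (use le i in \<open>auto simp: top.not_eq_extremum intro: le_less_trans\<close>)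
    have "(\<integral>\<omega>. (norm (N i \<omega>))^2 \<partial>M) = enn2real (\<integral>\<^sup>+\<omega>. ennreal ((norm (N i \<omega>))^2) \<partial>M)"
      by (rule integral_eq_nn_integral) (use i in auto)
    also have "\<dots> \<le> \<sigma>^2" using le by (simp add: enn2real_leI)
    finally show ?thesis using int by simp
  qed
  have Dint: "integrable M D" by (rule sq_int_imp_int[OF M DM Dsq])
  have Ncond: "AE \<omega> in M. real_cond_exp M F (\<lambda>\<omega>. inner (N i \<omega>) b) \<omega> = 0"
    if i: "i \<in> Gs" and b: "b \<in> Basis" for i b
  proof -
    have eq: "(\<lambda>\<omega>. inner (N i \<omega>) b) = (\<lambda>\<omega>. inner (g i \<omega>) b - inner (D \<omega>) b)"
      by (simp add: N_def D_def inner_diff_left)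
    have "AE \<omega> in M. real_cond_exp M F (\<lambda>\<omega>. inner (g i \<omega>) b - inner (D \<omega>) b) \<omega>
        = real_cond_exp M F (\<lambda>\<omega>. inner (g i \<omega>) b) \<omega> - real_cond_exp M F (\<lambda>\<omega>. inner (D \<omega>) b) \<omega>"
      by (rule F.real_cond_exp_diff) (use g_int[OF i] Dint in auto)
    moreover have "AE \<omega> in M. real_cond_exp M F (\<lambda>\<omega>. inner (g i \<omega>) b) \<omega> = inner (D \<omega>) b"
      using unbiased[OF i b] by (simp add: F_def D_def)
    moreover have "AE \<omega> in M. real_cond_exp M F (\<lambda>\<omega>. inner (D \<omega>) b) \<omega> = inner (D \<omega>) b"
      by (rule F.real_cond_exp_F_meas) (use Dint in auto)
    ultimately show ?thesis unfolding eq by eventually_elim simp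
  qed
  have DN: "integrable M (\<lambda>\<omega>. inner (D \<omega>) (N i \<omega>)) \<and> (\<integral>\<omega>. inner (D \<omega>) (N i \<omega>) \<partial>M) = 0"
    if i: "i \<in> Gs" for i
  proof -
    have NMi[measurable]: "N i \<in> borel_measurable M" using NM i .
    have int: "integrable M (\<lambda>\<omega>. inner (D \<omega>) b * inner (N i \<omega>) b)" if b: "b \<in> Basis" for b
      by (rule sqint(2)[OF DM NMi Dsq conjunct1[OF Nsq[OF i]] b b])
    have "(\<integral>\<omega>. inner (D \<omega>) (N i \<omega>) \<partial>M) = (\<integral>\<omega>. (\<Sum>b\<in>Basis. inner (D \<omega>) b * inner (N i \<omega>) b) \<partial>M)"
      by (rule Bochner_Integration.integral_cong[OF refl]) (rule euclidean_inner)
    also have "\<dots> = (\<Sum>b\<in>Basis. (\<integral>\<omega>. inner (D \<omega>) b * inner (N i \<omega>) b \<partial>M))"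
      by (rule Bochner_Integration.integral_sum[where f="\<lambda>b \<omega>. inner (D \<omega>) b * inner (N i \<omega>) b"]) (rule int)
    also have "\<dots> = 0"
    proof (rule sum.neutral, rule ballI)
      fix b :: 'v assume b: "b \<in> Basis"
      have "(\<integral>\<omega>. inner (D \<omega>) b * inner (N i \<omega>) b \<partial>M)
          = (\<integral>\<omega>. inner (D \<omega>) b * real_cond_exp M F (\<lambda>\<omega>. inner (N i \<omega>) b) \<omega> \<partial>M)"
        by (rule F.real_cond_exp_intg(2)[symmetric]) (use int[OF b] in auto)
      also have "\<dots> = (\<integral>\<omega>. 0 \<partial>M)"
        by (rule integral_cong_AE) (use Ncond[OF i b] in auto)
      finally show "(\<integral>\<omega>. inner (D \<omega>) b * inner (N i \<omega>) b \<partial>M) = 0" by simp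
    qed
    finally show ?thesis using sqint(1)[OF DM NMi Dsq conjunct1[OF Nsq[OF i]]] by simp
  qed
  have NN: "(\<integral>\<omega>. inner (N i \<omega>) (N j \<omega>) \<partial>M) = 0"
    if i: "i \<in> Gs" and j: "j \<in> Gs" and ij: "i \<noteq> j" for i j
  proof -
    have NMi[measurable]: "N i \<in> borel_measurable M" using NM i .
    have NMj[measurable]: "N j \<in> borel_measurable M" using NM j .
    define Fi where "Fi = gen_sigma M {N i}"
    define Fj where "Fj = gen_sigma M {N j}"
    have sFi: "sigma_finite_subalgebra M Fi" unfolding Fi_def by (rule gen_sigma_subalg[OF M]) auto
    have sFj: "sigma_finite_subalgebra M Fj" unfolding Fj_def by (rule gen_sigma_subalg[OF M]) auto
    have NFi[measurable]: "N i \<in> borel_measurable Fi" unfolding Fi_def by (rule gen_sigma_meas) simp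
    have NFj[measurable]: "N j \<in> borel_measurable Fj" unfolding Fj_def by (rule gen_sigma_meas) simp
    have indep: "AE \<omega> in M. real_cond_exp M F (indicator (A \<inter> B)) \<omega>
           = real_cond_exp M F (indicator A) \<omega> * real_cond_exp M F (indicator B) \<omega>"
      if A: "A \<in> sets Fi" and B: "B \<in> sets Fj" for A B
    proof -
      define A' where "A' = (\<lambda>k. if k = i then A else B)"
      have "AE \<omega> in M. real_cond_exp M F (indicator (\<Inter>k\<in>{i,j}. A' k)) \<omega>
                     = (\<Prod>k\<in>{i,j}. real_cond_exp M F (indicator (A' k)) \<omega>)"
        using noise_indep unfolding cond_indep_vars_def
        apply (elim allE[of _ "{i,j}"] allE[of _ A'])
        using i j A B ij by (auto simp: A'_def F_def N_def Fi_def Fj_def)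
      then show ?thesis using ij by (simp add: A'_def Int_commute)
    qed
    have int: "integrable M (\<lambda>\<omega>. inner (N i \<omega>) b * inner (N j \<omega>) b)" if b: "b \<in> Basis" for b
      by (rule sqint(2)[OF NMi NMj conjunct1[OF Nsq[OF i]] conjunct1[OF Nsq[OF j]] b b])
    have "(\<integral>\<omega>. inner (N i \<omega>) (N j \<omega>) \<partial>M) = (\<integral>\<omega>. (\<Sum>b\<in>Basis. inner (N i \<omega>) b * inner (N j \<omega>) b) \<partial>M)"
      by (rule Bochner_Integration.integral_cong[OF refl]) (rule euclidean_inner)
    also have "\<dots> = (\<Sum>b\<in>Basis. (\<integral>\<omega>. inner (N i \<omega>) b * inner (N j \<omega>) b \<partial>M))"
      by (rule Bochner_Integration.integral_sum[where f="\<lambda>b \<omega>. inner (N i \<omega>) b * inner (N j \<omega>) b"]) (rule int)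
    also have "\<dots> = 0"
    proof (rule sum.neutral, rule ballI)
      fix b :: 'v assume b: "b \<in> Basis"
      have Njint: "integrable M (N j)" by (rule sq_int_imp_int[OF M NMj conjunct1[OF Nsq[OF j]]])
      show "(\<integral>\<omega>. inner (N i \<omega>) b * inner (N j \<omega>) b \<partial>M) = 0"
        by (rule cross_zero[OF M subF sFi sFj indep _ _ _ int[OF b] Ncond[OF j b]])
           (use Njint in auto)
    qed
    finally show ?thesis .
  qed
  define v where "v = (\<lambda>i. if i \<in> Gs then 1 / real G else 0)"
  define S where "S = (\<lambda>\<omega>. \<Sum>i\<in>Gs. N i \<omega>)"
  define c1 where "c1 = - \<gamma> + L * \<gamma>^2 / 2"
  define c2 where "c2 = - \<gamma> / G + L * \<gamma>^2 / G"
  define c3 where "c3 = L * \<gamma>^2 / (2 * G^2)"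
  define R where "R = (\<lambda>\<omega>. \<delta> + f (X \<omega>) + c1 * (norm (D \<omega>))^2 + c2 * (\<Sum>i\<in>Gs. inner (D \<omega>) (N i \<omega>))
      + c3 * (\<Sum>i\<in>Gs. \<Sum>j\<in>Gs. inner (N i \<omega>) (N j \<omega>)))"
  have vS: "v \<in> simplex1 n"
  proof -
    have "(\<Sum>i\<in>{1..n}. v i) = (\<Sum>i\<in>Gs. v i)"
      by (rule sum.mono_neutral_right) (use Gs(1) in \<open>auto simp: v_def\<close>)
    also have "\<dots> = 1" using Gpos by (simp add: v_def G_def)
    finally show ?thesis by (auto simp: simplex1_def v_def)
  qed
  have gbar: "(\<Sum>i\<in>{1..n}. v i *\<^sub>R g i \<omega>) = D \<omega> + (1 / real G) *\<^sub>R S \<omega>" for \<omega>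
  proof -
    have "(\<Sum>i\<in>{1..n}. v i *\<^sub>R g i \<omega>) = (\<Sum>i\<in>Gs. v i *\<^sub>R g i \<omega>)"
      by (rule sum.mono_neutral_right) (use Gs(1) in \<open>auto simp: v_def\<close>)
    also have "\<dots> = (\<Sum>i\<in>Gs. (1 / real G) *\<^sub>R (D \<omega> + N i \<omega>))"
      by (rule sum.cong) (auto simp: v_def N_def D_def)
    also have "\<dots> = (1 / real G) *\<^sub>R (real G *\<^sub>R D \<omega> + S \<omega>)"
      by (simp add: scaleR_sum_right[symmetric] sum.distrib S_def G_def sum_constant_scaleR)
    also have "\<dots> = D \<omega> + (1 / real G) *\<^sub>R S \<omega>"
      using Gpos by (simp add: scaleR_add_right)
    finally show ?thesis .
  qed
  obtain m where m: "\<And>y. m \<le> f y" using below by (auto simp: bdd_below_def)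
  have pw: "(INF w\<in>simplex1 n. f (X \<omega> - \<gamma> *\<^sub>R (\<Sum>i\<in>{1..n}. w i *\<^sub>R g i \<omega>))) \<le> R \<omega> - \<delta>" for \<omega>
  proof -
    have "(INF w\<in>simplex1 n. f (X \<omega> - \<gamma> *\<^sub>R (\<Sum>i\<in>{1..n}. w i *\<^sub>R g i \<omega>)))
        \<le> f (X \<omega> - \<gamma> *\<^sub>R (\<Sum>i\<in>{1..n}. v i *\<^sub>R g i \<omega>))"
      by (rule cINF_lower[OF _ vS]) (auto intro!: bdd_belowI[where m=m] m)
    also have "\<dots> = f (X \<omega> - \<gamma> *\<^sub>R (D \<omega> + (1 / real G) *\<^sub>R S \<omega>))" by (simp only: gbar)
    also have "\<dots> \<le> f (X \<omega>) + inner (D \<omega>) ((X \<omega> - \<gamma> *\<^sub>R (D \<omega> + (1 / real G) *\<^sub>R S \<omega>)) - X \<omega>)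
        + L / 2 * (norm ((X \<omega> - \<gamma> *\<^sub>R (D \<omega> + (1 / real G) *\<^sub>R S \<omega>)) - X \<omega>))^2"
      unfolding D_def by (rule smooth)
    also have "\<dots> = R \<omega> - \<delta>"
    proof -
      define w where "w = \<gamma> *\<^sub>R (D \<omega> + (1 / real G) *\<^sub>R S \<omega>)"
      have x1: "(X \<omega> - w) - X \<omega> = - w" by simp
      have e1: "inner (D \<omega>) (S \<omega>) = (\<Sum>i\<in>Gs. inner (D \<omega>) (N i \<omega>))"
        by (simp add: S_def inner_sum_right)
      have e2: "inner (S \<omega>) (S \<omega>) = (\<Sum>i\<in>Gs. \<Sum>j\<in>Gs. inner (N i \<omega>) (N j \<omega>))"
        by (simp add: S_def inner_sum_right inner_sum_left) (rule sum.swap)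
      have n1: "(norm (- w))^2
          = \<gamma>^2 * ((norm (D \<omega>))^2 + 2 / G * inner (D \<omega>) (S \<omega>) + inner (S \<omega>) (S \<omega>) / G^2)"
        unfolding norm_minus_cancel power2_norm_eq_inner w_def
        by (simp add: inner_add_left inner_add_right inner_commute power2_eq_square algebra_simps)
      have n2: "inner (D \<omega>) (- w)
          = - \<gamma> * (norm (D \<omega>))^2 - \<gamma> / G * inner (D \<omega>) (S \<omega>)"
        unfolding power2_norm_eq_inner w_def by (simp add: inner_add_right algebra_simps)
      show ?thesis
        unfolding w_def[symmetric] x1 n1 n2
        unfolding R_def c1_def c2_def c3_def e1[symmetric] e2[symmetric]
        by (simp add: algebra_simps power2_eq_square)
    qed
    finally show ?thesis .
  qed
  define H where "H = gen_sigma M ({X} \<union> g ` {1..n})"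
  have subH: "sigma_finite_subalgebra M H" unfolding H_def
    by (rule gen_sigma_subalg[OF M]) (use g_meas in auto)
  interpret H: sigma_finite_subalgebra M H by (rule subH)
  have AEle: "AE \<omega> in M. real_cond_exp M H (\<lambda>\<omega>. f (X' \<omega>)) \<omega> \<le> R \<omega>"
        using inexact
  proof eventually_elim
    case (elim \<omega>)
    then show ?case using pw[of \<omega>] unfolding H_def by linarith
  qed
  have Nsqi: "integrable M (\<lambda>\<omega>. inner (N i \<omega>) (N j \<omega>))" if "i \<in> Gs" "j \<in> Gs" for i j
    by (rule sqint(1)[OF NM NM conjunct1[OF Nsq] conjunct1[OF Nsq]]) (use that in auto)
  have Rint: "integrable M R" unfolding R_def
  proof -
    have DNi: "\<And>i. i \<in> Gs \<Longrightarrow> integrable M (\<lambda>\<omega>. inner (D \<omega>) (N i \<omega>))" using DN by blast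
    show "integrable M (\<lambda>\<omega>. \<delta> + f (X \<omega>) + c1 * (norm (D \<omega>))^2 + c2 * (\<Sum>i\<in>Gs. inner (D \<omega>) (N i \<omega>))
      + c3 * (\<Sum>i\<in>Gs. \<Sum>j\<in>Gs. inner (N i \<omega>) (N j \<omega>)))"
      using fX_int Dsq DNi Nsqi by auto
  qed
  have intR: "(\<integral>\<omega>. R \<omega> \<partial>M) = \<delta> + (\<integral>\<omega>. f (X \<omega>) \<partial>M) + c1 * (\<integral>\<omega>. (norm (D \<omega>))^2 \<partial>M)
      + c2 * (\<Sum>i\<in>Gs. (\<integral>\<omega>. inner (D \<omega>) (N i \<omega>) \<partial>M))
      + c3 * (\<Sum>i\<in>Gs. \<Sum>j\<in>Gs. (\<integral>\<omega>. inner (N i \<omega>) (N j \<omega>) \<partial>M))"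
    unfolding R_def using fX_int Dsq DN Nsqi
    by (simp add: Bochner_Integration.integral_add Bochner_Integration.integral_sum integrable_sum prob_space)
  have sum0: "(\<Sum>i\<in>Gs. (\<integral>\<omega>. inner (D \<omega>) (N i \<omega>) \<partial>M)) = 0" using DN by simp
  have sumN: "(\<Sum>i\<in>Gs. \<Sum>j\<in>Gs. (\<integral>\<omega>. inner (N i \<omega>) (N j \<omega>) \<partial>M)) \<le> G * \<sigma>^2"
  proof -
    have "(\<Sum>i\<in>Gs. \<Sum>j\<in>Gs. (\<integral>\<omega>. inner (N i \<omega>) (N j \<omega>) \<partial>M))
        = (\<Sum>i\<in>Gs. \<Sum>j\<in>Gs. (if i = j then (\<integral>\<omega>. (norm (N i \<omega>))^2 \<partial>M) else 0))"
      by (intro sum.cong refl) (auto simp: NN power2_norm_eq_inner)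
    also have "\<dots> = (\<Sum>i\<in>Gs. (\<integral>\<omega>. (norm (N i \<omega>))^2 \<partial>M))"
      using finGs by simp
    also have "\<dots> \<le> (\<Sum>i\<in>Gs. \<sigma>^2)"
      by (rule sum_mono) (use Nsq in auto)
    also have "\<dots> = G * \<sigma>^2" by (simp add: G_def)
    finally show ?thesis .
  qed
  have "(\<integral>\<omega>. f (X' \<omega>) \<partial>M) = (\<integral>\<omega>. real_cond_exp M H (\<lambda>\<omega>. f (X' \<omega>)) \<omega> \<partial>M)"
    by (rule H.real_cond_exp_int(2)[symmetric, OF fX'_int])
  also have "\<dots> \<le> (\<integral>\<omega>. R \<omega> \<partial>M)"
    by (rule integral_mono_AE[OF H.real_cond_exp_int(1)[OF fX'_int] Rint AEle])
  also have "\<dots> \<le> \<delta> + (\<integral>\<omega>. f (X \<omega>) \<partial>M) + c1 * (\<integral>\<omega>. (norm (D \<omega>))^2 \<partial>M) + c3 * (G * \<sigma>^2)"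
  proof -
    have "0 \<le> c3" unfolding c3_def using L by simp
    then have "c3 * (\<Sum>i\<in>Gs. \<Sum>j\<in>Gs. (\<integral>\<omega>. inner (N i \<omega>) (N j \<omega>) \<partial>M)) \<le> c3 * (G * \<sigma>^2)"
      using sumN by (rule mult_left_mono[rotated])
    then show ?thesis unfolding intR sum0 by simp
  qed
  also have "\<dots> \<le> (\<integral>\<omega>. f (X \<omega>) \<partial>M) - \<gamma> / 2 * (\<integral>\<omega>. (norm (gradf (X \<omega>)))^2 \<partial>M)
        + \<delta> + L * \<gamma>^2 * \<sigma>^2 / (2 * real (card Gs))"
  proof -
    have a0: "0 \<le> (\<integral>\<omega>. (norm (D \<omega>))^2 \<partial>M)" by simp
    have "c1 \<le> - \<gamma> / 2"
    proof -
      have q: "L * \<gamma>^2 = (L * \<gamma>) * \<gamma>" by (simp add: power2_eq_square)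
      have "(L * \<gamma>) * \<gamma> \<le> (1/2) * \<gamma>" using \<gamma> by (intro mult_right_mono) auto
      then show ?thesis unfolding c1_def q using \<gamma> by linarith
    qed
    then have "c1 * (\<integral>\<omega>. (norm (D \<omega>))^2 \<partial>M) \<le> - \<gamma> / 2 * (\<integral>\<omega>. (norm (D \<omega>))^2 \<partial>M)"
      using a0 by (rule mult_right_mono)
    moreover have "c3 * (G * \<sigma>^2) = L * \<gamma>^2 * \<sigma>^2 / (2 * real (card Gs))"
      unfolding c3_def G_def using Gpos by (simp add: G_def power2_eq_square field_simps)
    ultimately show ?thesis by (simp add: D_def)
  qed
  finally show "(\<integral>\<omega>. f (X' \<omega>) \<partial>M) \<le> (\<integral>\<omega>. f (X \<omega>) \<partial>M) - \<gamma> / 2 * (\<integral>\<omega>. (norm (gradf (X \<omega>)))^2 \<partial>M)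
        + \<delta> + L * \<gamma>^2 * \<sigma>^2 / (2 * real (card Gs))" .
qed


theorem theorem1:
  fixes M :: "'a measure"
    and f :: "'v::euclidean_space \<Rightarrow> real" and gradf :: "'v \<Rightarrow> 'v"
    and n :: nat and Gs :: "nat set"
    and x :: "nat \<Rightarrow> 'a \<Rightarrow> 'v" and g :: "nat \<Rightarrow> nat \<Rightarrow> 'a \<Rightarrow> 'v"
    and w :: "nat \<Rightarrow> 'a \<Rightarrow> nat \<Rightarrow> real"
    and x0 :: 'v and \<gamma> L \<sigma> \<delta> :: real
  assumes M: "prob_space M"
    and below: "bdd_below (range f)"
    and grad: "\<And>y. GDERIV f y :> gradf y"
    and n: "1 \<le> n"
    and Gs: "Gs \<subseteq> {1..n}" "Gs \<noteq> {}"
    and \<gamma>: "0 < \<gamma>" "\<gamma> \<le> 1 / (2 * L)"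
    and L: "0 < L"
    and smooth: "\<And>u y. f u \<le> f y + inner (gradf y) (u - y) + L / 2 * (norm (u - y))^2"
    and \<sigma>: "0 \<le> \<sigma>" and \<delta>: "0 \<le> \<delta>"
    and x_start: "\<And>\<omega>. x 0 \<omega> = x0"
    and x_step: "\<And>t \<omega>. \<omega> \<in> space M \<Longrightarrow>
           x (Suc t) \<omega> = x t \<omega> - \<gamma> *\<^sub>R (\<Sum>i\<in>{1..n}. w (Suc t) \<omega> i *\<^sub>R g t i \<omega>)"
    and w_simplex: "\<And>t \<omega>. \<omega> \<in> space M \<Longrightarrow> w (Suc t) \<omega> \<in> simplex1 n"
    and x_meas: "\<And>t. x t \<in> borel_measurable M"
    and g_meas: "\<And>t i. i \<in> {1..n} \<Longrightarrow> g t i \<in> borel_measurable M"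
    and g_int: "\<And>t i. i \<in> Gs \<Longrightarrow> integrable M (g t i)"
    and f_int: "\<And>t. integrable M (\<lambda>\<omega>. f (x t \<omega>))"
    and unbiased: "\<And>t i b. i \<in> Gs \<Longrightarrow> b \<in> Basis \<Longrightarrow>
           AE \<omega> in M. real_cond_exp M (gen_sigma M {x t}) (\<lambda>\<omega>'. inner (g t i \<omega>') b) \<omega>
                         = inner (gradf (x t \<omega>)) b"
    and bounded_var: "\<And>t i. i \<in> Gs \<Longrightarrow>
           AE \<omega> in M. nn_cond_exp M (gen_sigma M {x t})
                          (\<lambda>\<omega>'. ennreal ((norm (g t i \<omega>' - gradf (x t \<omega>')))^2)) \<omega>
                        \<le> ennreal (\<sigma>^2)"
    and noise_indep: "\<And>t. cond_indep_vars M (gen_sigma M {x t})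
           (\<lambda>i \<omega>. g t i \<omega> - gradf (x t \<omega>)) Gs"
    and inexact: "\<And>t. AE \<omega> in M.
           real_cond_exp M (gen_sigma M ({x t} \<union> g t ` {1..n})) (\<lambda>\<omega>'. f (x (Suc t) \<omega>')) \<omega>
           - (INF v\<in>simplex1 n. f (x t \<omega> - \<gamma> *\<^sub>R (\<Sum>i\<in>{1..n}. v i *\<^sub>R g t i \<omega>))) \<le> \<delta>"
  shows "(\<forall>T::nat. 1 \<le> T \<longrightarrow>
            (1 / real T) * (\<Sum>t<T. integral\<^sup>L M (\<lambda>\<omega>. (norm (gradf (x t \<omega>)))^2))
            \<le> 2 * (f x0 - (INF u. f u)) / (real T * \<gamma>) + 2 * \<sigma>^2 * \<gamma> * L / real (card Gs)
              + 2 * \<delta> / \<gamma>)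
       \<and> (\<forall>\<mu>::real. 0 < \<mu> \<longrightarrow>
            (\<forall>u. (INF u. f u) \<ge> f u - 1 / (2 * \<mu>) * (norm (gradf u))^2) \<longrightarrow>
            (\<forall>T::nat. 1 \<le> T \<longrightarrow>
               integral\<^sup>L M (\<lambda>\<omega>. f (x T \<omega>)) - (INF u. f u)
               \<le> (1 - \<gamma> * \<mu>)^T * (f x0 - (INF u. f u))
                 + \<sigma>^2 * \<gamma> * L / (\<mu> * real (card Gs)) + \<delta> / (\<gamma> * \<mu>)))"
proof -
  interpret prob_space M by fact
  define fs where "fs = (INF u. f u)"
  define G where "G = card Gs"
  define E where "E = (\<lambda>t. (\<integral>\<omega>. f (x t \<omega>) \<partial>M))"
  define a where "a = (\<lambda>t. (\<integral>\<omega>. (norm (gradf (x t \<omega>)))^2 \<partial>M))"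
  define c where "c = \<delta> + L * \<gamma>^2 * \<sigma>^2 / (2 * real G)"
  have finGs: "finite Gs" using Gs(1) finite_subset by blast
  have Gpos: "0 < G" using finGs Gs(2) by (simp add: G_def card_gt_0_iff)
  have Lg: "L * \<gamma> \<le> 1 / 2" using \<gamma>(2) L by (simp add: field_simps)
  have fs_le: "fs \<le> f u" for u unfolding fs_def using below by (simp add: cInf_lower)
  have os: "integrable M (\<lambda>\<omega>. (norm (gradf (x t \<omega>)))^2) \<and>
      E (Suc t) \<le> E t - \<gamma> / 2 * a t + c" for t
    using one_step[OF M below grad Gs \<gamma>(1) Lg L smooth \<sigma> x_meas[of t] g_meas[where t=t] g_int[where t=t]
        f_int[of t] f_int[of "Suc t"] unbiased[where t=t] bounded_var[where t=t] noise_indep[of t] inexact[of t]]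
    unfolding E_def a_def c_def G_def by simp
  have E0: "E 0 = f x0" unfolding E_def x_start by (simp add: prob_space)
  have Efs: "fs \<le> E t" for t
  proof -
    have "(\<integral>\<omega>. fs \<partial>M) \<le> E t" unfolding E_def
      by (rule integral_mono) (use f_int fs_le in auto)
    then show ?thesis by (simp add: prob_space)
  qed
  have a0: "0 \<le> a t" for t unfolding a_def by simp
  have c0: "0 \<le> c" unfolding c_def using \<delta> L Gpos by simp
  have g0: "0 < \<gamma>" by (rule \<gamma>(1))
  show ?thesis
  proof (intro conjI allI impI)
    fix T :: nat assume T: "1 \<le> T"
    have sumb: "E T + \<gamma> / 2 * (\<Sum>t<T. a t) \<le> E 0 + real T * c" for T
    proof (induction T)
      case 0 then show ?case by simp
    next
      case (Suc T)
      have "E (Suc T) + \<gamma> / 2 * (\<Sum>t<Suc T. a t) = E (Suc T) + \<gamma> / 2 * a T + \<gamma> / 2 * (\<Sum>t<T. a t)"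
        by (simp add: algebra_simps)
      also have "\<dots> \<le> E T + c + \<gamma> / 2 * (\<Sum>t<T. a t)" using os[of T] by simp
      also have "\<dots> \<le> E 0 + real (Suc T) * c" using Suc.IH by (simp add: algebra_simps)
      finally show ?case .
    qed
    have "\<gamma> / 2 * (\<Sum>t<T. a t) \<le> (f x0 - fs) + real T * c"
      using sumb[of T] Efs[of T] E0 by linarith
    then have "(\<Sum>t<T. a t) \<le> 2 * (f x0 - fs) / \<gamma> + 2 * real T * c / \<gamma>"
      using g0 by (simp add: field_simps)
    then have "(1 / real T) * (\<Sum>t<T. a t) \<le> (1 / real T) * (2 * (f x0 - fs) / \<gamma> + 2 * real T * c / \<gamma>)"
      using T by (intro mult_left_mono) auto
    also have "\<dots> = 2 * (f x0 - fs) / (real T * \<gamma>) + 2 * c / \<gamma>"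
      using T g0 by (simp add: field_simps)
    also have "2 * c / \<gamma> = 2 * \<delta> / \<gamma> + \<sigma>^2 * \<gamma> * L / real G"
      unfolding c_def using g0 Gpos by (simp add: field_simps power2_eq_square)
    also have "\<sigma>^2 * \<gamma> * L / real G \<le> 2 * \<sigma>^2 * \<gamma> * L / real G"
      using g0 L Gpos by (simp add: divide_right_mono)
    finally show "(1 / real T) * (\<Sum>t<T. integral\<^sup>L M (\<lambda>\<omega>. (norm (gradf (x t \<omega>)))^2))
            \<le> 2 * (f x0 - (INF u. f u)) / (real T * \<gamma>) + 2 * \<sigma>^2 * \<gamma> * L / real (card Gs)
              + 2 * \<delta> / \<gamma>"
      unfolding a_def fs_def G_def by simp
  next
    fix \<mu> :: real and T :: nat
    assume \<mu>: "0 < \<mu>" and PL: "\<forall>u. (INF u. f u) \<ge> f u - 1 / (2 * \<mu>) * (norm (gradf u))^2"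
      and T: "1 \<le> T"
    have PL': "2 * \<mu> * (f u - fs) \<le> (norm (gradf u))^2" for u
      using PL[rule_format, of u] \<mu> unfolding fs_def by (simp add: field_simps)
    have rhs0: "0 \<le> \<sigma>^2 * \<gamma> * L / (\<mu> * real G) + \<delta> / (\<gamma> * \<mu>)"
      using \<mu> g0 L Gpos \<delta> by simp
    show "integral\<^sup>L M (\<lambda>\<omega>. f (x T \<omega>)) - (INF u. f u)
               \<le> (1 - \<gamma> * \<mu>)^T * (f x0 - (INF u. f u))
                 + \<sigma>^2 * \<gamma> * L / (\<mu> * real (card Gs)) + \<delta> / (\<gamma> * \<mu>)"
    proof (cases "\<gamma> * \<mu> \<le> 1")
      case True
      define q where "q = 1 - \<gamma> * \<mu>"
      have q0: "0 \<le> q" using True by (simp add: q_def)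
      have aE: "2 * \<mu> * (E t - fs) \<le> a t" for t
      proof -
        have "(\<integral>\<omega>. 2 * \<mu> * (f (x t \<omega>) - fs) \<partial>M) \<le> a t" unfolding a_def
          by (rule integral_mono) (use f_int os PL' in auto)
        then show ?thesis using f_int by (simp add: E_def prob_space)
      qed
      have rec: "E (Suc t) - fs \<le> q * (E t - fs) + c" for t
      proof -
        have "\<gamma> / 2 * (2 * \<mu> * (E t - fs)) \<le> \<gamma> / 2 * a t" using mult_left_mono[OF aE[of t], of "\<gamma> / 2"] g0 by simp
        then show ?thesis using os[of t] unfolding q_def by (simp add: algebra_simps)
      qed
      have ind: "E t - fs \<le> q^t * (E 0 - fs) + c * (1 - q^t) / (\<gamma> * \<mu>)" for t
      proof (induction t)
        case 0 then show ?case by simp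
      next
        case (Suc t)
        have "E (Suc t) - fs \<le> q * (E t - fs) + c" by (rule rec)
        also have "\<dots> \<le> q * (q^t * (E 0 - fs) + c * (1 - q^t) / (\<gamma> * \<mu>)) + c"
          using Suc.IH q0 by (simp add: mult_left_mono)
        also have "\<dots> = q^Suc t * (E 0 - fs) + c * (1 - q^Suc t) / (\<gamma> * \<mu>)"
          using g0 \<mu> by (simp add: q_def field_simps)
        finally show ?case .
      qed
      have "c * (1 - q^T) / (\<gamma> * \<mu>) \<le> c / (\<gamma> * \<mu>)"
        using c0 q0 g0 \<mu> by (simp add: divide_right_mono mult_left_le)
      also have "c / (\<gamma> * \<mu>) = \<delta> / (\<gamma> * \<mu>) + L * \<gamma> * \<sigma>^2 / (2 * \<mu> * real G)"
        unfolding c_def using g0 \<mu> Gpos by (simp add: field_simps power2_eq_square)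
      also have "L * \<gamma> * \<sigma>^2 / (2 * \<mu> * real G) \<le> \<sigma>^2 * \<gamma> * L / (\<mu> * real G)"
        using g0 \<mu> Gpos L by (simp add: field_simps)
      finally have cb: "c * (1 - q^T) / (\<gamma> * \<mu>) \<le> \<delta> / (\<gamma> * \<mu>) + \<sigma>^2 * \<gamma> * L / (\<mu> * real G)" by simp
      show ?thesis using ind[of T] cb E0 unfolding E_def fs_def q_def G_def by simp
    next
      case False
      have const: "f u = fs" for u
      proof -
        have sb: "(norm (gradf u))^2 \<le> 2 * L * (f u - fs)"
          unfolding fs_def by (rule grad_bound[OF below L smooth])
        have "2 * \<mu> * (f u - fs) \<le> (norm (gradf u))^2" by (rule PL')
        have "\<mu> > L"
        proof -
          have "1 < \<gamma> * \<mu>" using False by simp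
          moreover have "\<gamma> * L \<le> 1 / 2" using Lg by (simp add: mult.commute)
          ultimately have "\<gamma> * L < \<gamma> * \<mu>" by linarith
          then show ?thesis using g0 by simp
        qed
        have d0: "0 \<le> f u - fs" using fs_le[of u] by simp
        have "2 * \<mu> * (f u - fs) \<le> 2 * L * (f u - fs)" using PL'[of u] sb by linarith
        then have "(\<mu> - L) * (f u - fs) \<le> 0" by (simp add: algebra_simps)
        then have "f u - fs \<le> 0" using \<open>\<mu> > L\<close> d0 by (simp add: mult_le_0_iff)
        then show ?thesis using d0 by simp
      qed
      have "integral\<^sup>L M (\<lambda>\<omega>. f (x T \<omega>)) = fs" by (simp add: const prob_space)
      moreover have "f x0 = fs" by (rule const)
      ultimately show ?thesis using rhs0 unfolding fs_def G_def by simp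
    qed
  qed
qed

end
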